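(* There exist constants $0<M_1\le M_2<\infty$ such that \[M_1\le\inf_{b\in\Sigma(C,A,\gamma)}\ \inf_{x\in[y_1,\bar y]}\xi_b(x)\le\sup_{b\in\Sigma(C,A,\gamma)}\ \sup_{x\in[y_1,\bar y]}\xi_b(x)\le M_2.\]
   Context: Let $\sigma:\mathbb{R}\to\mathbb{R}$ be locally Lipschitz with $\underline\nu\le|\sigma(x)|\le\overline\nu$ for all $x$, for constants $0<\underline\nu\le\overline\nu<\infty$. For constants $A,\gamma>0$, $C\ge1$, let $\Sigma(C,A,\gamma)=\Sigma(C,A,\gamma,\sigma)$ be the set of locally Lipschitz $b:\mathbb{R}\to\mathbb{R}$ with $|b(x)|\le C(1+|x|)$ for all $x$ and $\frac{b(x)}{\sigma^2(x)}\operatorname{sgn}(x)\le-\gamma$ for all $|x|>A$. For $b$ in this class, $\rho_b(x)=\frac{1}{C_{b,\sigma}\sigma^2(x)}\exp\big(\int_0^x\frac{2b(y)}{\sigma^2(y)}\mathrm{d}y\big)$ is the invariant density ($C_{b,\sigma}$ normalizing). Fix $y_0\in\mathbb{R}$ and set $\xi_b(x):=2\int_{y_0}^x\frac{1}{\sigma^2(y)\rho_b(y)}\int_{-\infty}^y\rho_b(z)\,\mathrm{d}z\,\mathrm{d}y$. Here $y_0<y_1<\bar y$ are fixed real numbers. *)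

theory Defs
  imports "HOL-Analysis.Analysis"
begin

definition loc_lipschitz :: "(real \<Rightarrow> real) \<Rightarrow> bool" where
  "loc_lipschitz f \<longleftrightarrow> (\<forall>x. \<exists>e>0. \<exists>L. L-lipschitz_on (cball x e) f)"

definition Sigma_class :: "real \<Rightarrow> real \<Rightarrow> real \<Rightarrow> (real \<Rightarrow> real) \<Rightarrow> (real \<Rightarrow> real) set" where
  "Sigma_class C A \<gamma> \<sigma> = {b. loc_lipschitz b \<and> (\<forall>x. \<bar>b x\<bar> \<le> C * (1 + \<bar>x\<bar>)) \<and>
       (\<forall>x. \<bar>x\<bar> > A \<longrightarrow> b x / (\<sigma> x)\<^sup>2 * sgn x \<le> - \<gamma>)}"

definition dens_un :: "(real \<Rightarrow> real) \<Rightarrow> (real \<Rightarrow> real) \<Rightarrow> real \<Rightarrow> real" where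
  "dens_un b \<sigma> x = (1 / (\<sigma> x)\<^sup>2) * exp (LBINT y=ereal 0..ereal x. 2 * b y / (\<sigma> y)\<^sup>2)"

definition norm_const :: "(real \<Rightarrow> real) \<Rightarrow> (real \<Rightarrow> real) \<Rightarrow> real" where
  "norm_const b \<sigma> = (LBINT x. dens_un b \<sigma> x)"

definition rho :: "(real \<Rightarrow> real) \<Rightarrow> (real \<Rightarrow> real) \<Rightarrow> real \<Rightarrow> real" where
  "rho b \<sigma> x = dens_un b \<sigma> x / norm_const b \<sigma>"

definition xi :: "(real \<Rightarrow> real) \<Rightarrow> (real \<Rightarrow> real) \<Rightarrow> real \<Rightarrow> real \<Rightarrow> real" where
  "xi b \<sigma> y0 x = 2 * (LBINT y=ereal y0..ereal x.
      (1 / ((\<sigma> y)\<^sup>2 * rho b \<sigma> y)) * (LBINT z=-\<infinity>..ereal y. rho b \<sigma> z))"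

end

theory Submission
  imports Defs
begin

lemma loclip_cont: "loc_lipschitz f \<Longrightarrow> continuous_on UNIV f"
proof -
  assume a: "loc_lipschitz f"
  have "isCont f x" for x
  proof -
    obtain e L where e: "e > 0" "L-lipschitz_on (cball x e) f"
      using a unfolding loc_lipschitz_def by blast
    have "continuous_on (ball x e) f"
      using lipschitz_on_continuous_on[OF e(2)] continuous_on_subset ball_subset_cball by blast
    then show ?thesis using e(1) continuous_on_interior interior_ball by (metis centre_in_ball)
  qed
  then show ?thesis by (simp add: continuous_at_imp_continuous_on)
qed

lemma antideriv:
  fixes f :: "real \<Rightarrow> real"
  assumes "continuous_on UNIV f"
  shows "\<forall>x. ((\<lambda>u. LBINT y=ereal 0..ereal u. f y) has_real_derivative f x) (at x)"
proof
  fix x :: real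
  have "((\<lambda>u. LBINT y=ereal 0..ereal u. f y) has_vector_derivative (f x)) (at x within {-\<bar>x\<bar>-1..\<bar>x\<bar>+1})"
    using interval_integral_FTC2[of "-\<bar>x\<bar>-1" 0 "\<bar>x\<bar>+1" f x] continuous_on_subset[OF assms] by auto
  moreover have "at x within {-\<bar>x\<bar>-1..\<bar>x\<bar>+1} = at x"
    by (rule at_within_Icc_at) auto
  ultimately show "((\<lambda>u. LBINT y=ereal 0..ereal u. f y) has_real_derivative f x) (at x)"
    by (simp add: has_real_derivative_iff_has_vector_derivative)
qed

lemma mvt_le:
  fixes Q f :: "real \<Rightarrow> real"
  assumes "\<forall>t. (Q has_real_derivative f t) (at t)" "a \<le> b" "\<And>t. a < t \<Longrightarrow> t < b \<Longrightarrow> f t \<le> M"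
  shows "Q b - Q a \<le> M * (b - a)"
proof (cases "a = b")
  case False
  then have "a < b" using assms(2) by simp
  from MVT2[OF this, of Q f] assms(1) obtain z where "a < z" "z < b" "Q b - Q a = (b - a) * f z" by blast
  then show ?thesis using assms(3)[of z] \<open>a<b\<close> by (simp add: mult.commute mult_left_mono)
qed simp

lemma mvt_ge:
  fixes Q f :: "real \<Rightarrow> real"
  assumes "\<forall>t. (Q has_real_derivative f t) (at t)" "a \<le> b" "\<And>t. a < t \<Longrightarrow> t < b \<Longrightarrow> M \<le> f t"
  shows "M * (b - a) \<le> Q b - Q a"
proof (cases "a = b")
  case False
  then have "a < b" using assms(2) by simp
  from MVT2[OF this, of Q f] assms(1) obtain z where "a < z" "z < b" "Q b - Q a = (b - a) * f z" by blast
  then show ?thesis using assms(3)[of z] \<open>a<b\<close> by (simp add: mult.commute mult_left_mono)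
qed simp

lemma exp_abs_integrable:
  fixes c :: real assumes "c > 0"
  shows "integrable lborel (\<lambda>x. exp (- c * \<bar>x\<bar>))"
proof -
  have "(\<lambda>x. exp (- c * x)) absolutely_integrable_on {0..}"
    by (rule nonnegative_absolutely_integrable_1[OF integrable_on_exp_minus_to_infinity[OF assms]]) auto
  then have "integrable lebesgue (\<lambda>x. indicator {0..} x *\<^sub>R exp (- c * x))"
    unfolding set_integrable_def .
  then have i1: "integrable lborel (\<lambda>x. indicator {0..} x *\<^sub>R exp (- c * x))"
    using integrable_completion[of "(\<lambda>x::real. indicator {0..} x *\<^sub>R exp (- c * x))" lborel]
    by simp
  have i2: "integrable lborel (\<lambda>x. indicator {0..} (-x) *\<^sub>R exp (- c * (-x)))"
    using lborel_integrable_real_affine[OF i1, of "-1" 0] by simp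
  show ?thesis
    apply (rule Bochner_Integration.integrable_bound[OF Bochner_Integration.integrable_add[OF i1 i2]])
     apply simp
    apply (auto simp: indicator_def)
    done
qed

lemma int_lower:
  fixes g :: "real \<Rightarrow> real"
  assumes "integrable lborel g" "\<And>x. 0 \<le> g x" "\<And>x. x \<in> T \<Longrightarrow> c \<le> g x" "T \<subseteq> S"
    "T \<in> sets lborel" "S \<in> sets lborel" "emeasure lborel T < \<infinity>" "0 \<le> c"
  shows "c * measure lborel T \<le> (LINT x:S|lborel. g x)"
proof -
  have "c * measure lborel T = (LINT x|lborel. indicator T x * c)"
    using assms(5,7) by (simp add: mult.commute)
  also have "\<dots> \<le> (LINT x|lborel. indicator S x * g x)"
  proof (rule integral_mono)
    show "integrable lborel (\<lambda>x. indicator T x * c)"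
      using assms(5,7) by (simp add: less_top)
    show "integrable lborel (\<lambda>x. indicator S x * g x)"
      using integrable_mult_indicator[OF assms(6,1)] by simp
    show "indicator T x * c \<le> indicator S x * g x" for x
      using assms(2)[of x] assms(3)[of x] assms(4) assms(8) by (auto simp: indicator_def)
  qed
  finally show ?thesis by (simp add: set_lebesgue_integral_def)
qed

lemma int_mono_set:
  fixes g :: "real \<Rightarrow> real"
  assumes "integrable lborel g" "\<And>x. 0 \<le> g x" "S \<subseteq> T" "S \<in> sets lborel" "T \<in> sets lborel"
  shows "(LINT x:S|lborel. g x) \<le> (LINT x:T|lborel. g x)"
  unfolding set_lebesgue_integral_def
proof (rule integral_mono)
  show "integrable lborel (\<lambda>x. indicator S x *\<^sub>R g x)"
    using integrable_mult_indicator[OF assms(4,1)] by simp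
  show "integrable lborel (\<lambda>x. indicator T x *\<^sub>R g x)"
    using integrable_mult_indicator[OF assms(5,1)] by simp
  show "indicator S x *\<^sub>R g x \<le> indicator T x *\<^sub>R g x" for x
    using assms(2)[of x] assms(3) by (auto simp: indicator_def)
qed

lemma int_le_total:
  fixes g :: "real \<Rightarrow> real"
  assumes "integrable lborel g" "\<And>x. 0 \<le> g x" "S \<in> sets lborel"
  shows "(LINT x:S|lborel. g x) \<le> (LINT x|lborel. g x)"
  using int_mono_set[OF assms(1,2) _ assms(3), of UNIV] by (simp add: set_lebesgue_integral_def)

theorem lemma4p1:
  fixes \<sigma> :: "real \<Rightarrow> real" and \<nu>lo \<nu>hi C A \<gamma> y0 y1 ybar :: real
  assumes "loc_lipschitz \<sigma>"
    and "0 < \<nu>lo" and "\<nu>lo \<le> \<nu>hi"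
    and "\<And>x. \<nu>lo \<le> \<bar>\<sigma> x\<bar> \<and> \<bar>\<sigma> x\<bar> \<le> \<nu>hi"
    and "A > 0" and "\<gamma> > 0" and "C \<ge> 1"
    and "y0 < y1" and "y1 < ybar"
  shows "\<exists>M1 M2. 0 < M1 \<and> M1 \<le> M2 \<and>
           (\<forall>b \<in> Sigma_class C A \<gamma> \<sigma>. \<forall>x \<in> {y1..ybar}. M1 \<le> xi b \<sigma> y0 x \<and> xi b \<sigma> y0 x \<le> M2)"
proof -
  have sc: "continuous_on UNIV \<sigma>" using loclip_cont assms(1) by blast
  have s2lo: "\<nu>lo^2 \<le> (\<sigma> x)^2" for x
    using assms(2) assms(4)[of x] by (metis abs_le_square_iff abs_of_pos)
  have s2hi: "(\<sigma> x)^2 \<le> \<nu>hi^2" for x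
    using assms(2) assms(4)[of x] by (metis abs_le_square_iff abs_of_nonneg order.trans less_imp_le)
  have s2pos: "(\<sigma> x)^2 > 0" for x
    using s2lo[of x] assms(2) by (smt (verit) zero_less_power)
  have snz: "\<sigma> x \<noteq> 0" for x using s2pos[of x] by auto
  define R where "R = \<bar>y0\<bar> + \<bar>ybar\<bar> + A + 1"
  define L where "L = 2*C*(1+R)/\<nu>lo^2"
  define K1 where "K1 = L*R + 2*\<gamma>*R"
  define c0 where "c0 = exp(-L*R)/\<nu>hi^2"
  define D where "D = (\<lambda>z::real. exp K1 / \<nu>lo^2 * exp(-(2*\<gamma>)*\<bar>z\<bar>))"
  define B0 where "B0 = (LINT z|lborel. D z)"
  define m where "m = exp(-L*R) * c0"
  define K where "K = exp(L*R) * B0"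
  define M1 where "M1 = 2*m*(y1-y0)"
  define M2 where "M2 = max M1 (2*K*(ybar-y0))"
  have Rge: "R \<ge> 1" "R > A" "\<bar>y0\<bar> + 1 \<le> R" "\<bar>ybar\<bar> \<le> R" using assms(5) by (auto simp: R_def)
  have Lpos: "L > 0" using assms(2,7) Rge by (auto simp: L_def)
  have c0pos: "c0 > 0" using assms(2,3) by (auto simp: c0_def)
  have mpos: "m > 0" using c0pos by (simp add: m_def)
  have M1pos: "M1 > 0" using mpos assms(8) by (simp add: M1_def)
  have Dint: "integrable lborel D"
    unfolding D_def using exp_abs_integrable[of "2*\<gamma>"] assms(6) by simp
  have Dnn: "0 \<le> D z" for z by (simp add: D_def)
  have main: "M1 \<le> xi b \<sigma> y0 x \<and> xi b \<sigma> y0 x \<le> M2" if b: "b \<in> Sigma_class C A \<gamma> \<sigma>" and x: "x \<in> {y1..ybar}" for b x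
  proof -
    have bl: "loc_lipschitz b" "\<And>t. \<bar>b t\<bar> \<le> C*(1+\<bar>t\<bar>)" "\<And>t. \<bar>t\<bar> > A \<Longrightarrow> b t/(\<sigma> t)^2 * sgn t \<le> -\<gamma>"
      using b unfolding Sigma_class_def by auto
    define f where "f = (\<lambda>y. 2 * b y / (\<sigma> y)^2)"
    have fc: "continuous_on UNIV f"
      unfolding f_def using loclip_cont[OF bl(1)] sc snz by (auto intro!: continuous_intros)
    define Q where "Q = (\<lambda>u. LBINT y=ereal 0..ereal u. f y)"
    have Qd: "\<forall>t. (Q has_real_derivative f t) (at t)" using antideriv[OF fc] by (simp add: Q_def)
    have Q0: "Q 0 = 0" by (simp add: Q_def)
    have Qc: "continuous_on UNIV Q" using Qd by (meson DERIV_isCont continuous_at_imp_continuous_on)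
    have dens: "dens_un b \<sigma> z = exp (Q z) / (\<sigma> z)^2" for z by (simp add: dens_un_def Q_def f_def)
    have fL: "\<bar>f t\<bar> \<le> L" if "\<bar>t\<bar> \<le> R" for t
    proof -
      have "\<bar>b t\<bar> \<le> C*(1+R)" using bl(2)[of t] that assms(7)
        by (smt (verit) mult_left_mono)
      then have "2*\<bar>b t\<bar> / (\<sigma> t)^2 \<le> 2*(C*(1+R)) / (\<sigma> t)^2"
        using s2pos[of t] by (simp add: divide_right_mono)
      also have "\<dots> \<le> 2*(C*(1+R)) / \<nu>lo^2"
        using s2lo[of t] s2pos[of t] assms(2,7) Rge by (intro divide_left_mono) auto
      finally show ?thesis by (simp add: f_def L_def abs_divide abs_mult)
    qed
    have fpos: "f t \<le> -2*\<gamma>" if "t > A" for t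
      using bl(3)[of t] that assms(5) by (simp add: f_def)
    have fneg: "2*\<gamma> \<le> f t" if "t < -A" for t
      using bl(3)[of t] that assms(5) by (simp add: f_def)
    have QR: "\<bar>Q z\<bar> \<le> L*R" if "\<bar>z\<bar> \<le> R" for z
    proof (cases "z \<ge> 0")
      case True
      have "Q z - Q 0 \<le> L*(z-0)"
        by (rule mvt_le[OF Qd True]) (use fL that in \<open>smt (verit)\<close>)
      moreover have "(-L)*(z-0) \<le> Q z - Q 0"
        by (rule mvt_ge[OF Qd True]) (use fL that in \<open>smt (verit)\<close>)
      moreover have "L*z \<le> L*R" using mult_left_mono[of z R L] True that Lpos by auto
      ultimately show ?thesis using Q0 by auto
    next
      case False
      then have F: "z \<le> 0" by simp
      have "Q 0 - Q z \<le> L*(0-z)"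
        by (rule mvt_le[OF Qd F]) (use fL that in \<open>smt (verit)\<close>)
      moreover have "(-L)*(0-z) \<le> Q 0 - Q z"
        by (rule mvt_ge[OF Qd F]) (use fL that in \<open>smt (verit)\<close>)
      moreover have "L*(-z) \<le> L*R" using mult_left_mono[of "-z" R L] F that Lpos by auto
      ultimately show ?thesis using Q0 by auto
    qed
    have Qglob: "Q z \<le> K1 - 2*\<gamma>*\<bar>z\<bar>" for z
    proof -
      consider "\<bar>z\<bar> \<le> R" | "z > R" | "z < -R" by linarith
      then show ?thesis
      proof cases
        case 1
        have "2*\<gamma>*\<bar>z\<bar> \<le> 2*\<gamma>*R" using 1 assms(6) by auto
        then show ?thesis using QR[OF 1] unfolding K1_def by auto
      next
        case 2
        have "Q z - Q R \<le> (-2*\<gamma>)*(z-R)"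
          by (rule mvt_le[OF Qd]) (use fpos 2 Rge in auto)
        moreover have "Q R \<le> L*R" using QR[of R] Rge by auto
        ultimately show ?thesis using 2 Rge unfolding K1_def by (auto simp: algebra_simps)
      next
        case 3
        have "(2*\<gamma>)*(-R-z) \<le> Q (-R) - Q z"
          by (rule mvt_ge[OF Qd]) (use fneg 3 Rge in auto)
        moreover have "Q (-R) \<le> L*R" using QR[of "-R"] Rge by auto
        ultimately show ?thesis using 3 Rge unfolding K1_def by (auto simp: algebra_simps)
      qed
    qed
    have dnn: "0 \<le> dens_un b \<sigma> z" for z by (simp add: dens)
    have dle: "dens_un b \<sigma> z \<le> D z" for z
    proof -
      have e1: "exp (Q z) \<le> exp K1 * exp(-(2*\<gamma>)*\<bar>z\<bar>)"
        using Qglob[of z] by (subst mult_exp_exp) simp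
      then have "exp (Q z)/(\<sigma> z)^2 \<le> exp K1 * exp(-(2*\<gamma>)*\<bar>z\<bar>)/(\<sigma> z)^2"
        using s2pos[of z] by (simp add: divide_right_mono)
      also have "\<dots> \<le> exp K1 * exp(-(2*\<gamma>)*\<bar>z\<bar>)/\<nu>lo^2"
        using s2lo[of z] s2pos[of z] assms(2) by (intro divide_left_mono) auto
      finally show ?thesis by (simp add: dens D_def)
    qed
    have dge: "c0 \<le> dens_un b \<sigma> z" if "\<bar>z\<bar> \<le> R" for z
    proof -
      have "exp (-L*R) \<le> exp (Q z)" using QR[OF that] by simp
      then have "exp (-L*R)/\<nu>hi^2 \<le> exp (Q z)/\<nu>hi^2"
        using assms(2,3) by (simp add: divide_right_mono)
      also have "\<dots> \<le> exp (Q z)/(\<sigma> z)^2"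
        using s2hi[of z] s2pos[of z] assms(2,3) by (intro divide_left_mono) auto
      finally show ?thesis by (simp add: dens c0_def)
    qed
    have dfun: "dens_un b \<sigma> = (\<lambda>z. exp (Q z)/(\<sigma> z)^2)" by (rule ext) (rule dens)
    have dcont: "continuous_on UNIV (dens_un b \<sigma>)"
      unfolding dfun using Qc sc snz by (auto intro!: continuous_intros)
    have dmeas: "dens_un b \<sigma> \<in> borel_measurable lborel"
      using borel_measurable_continuous_onI[OF dcont] by simp
    have dint: "integrable lborel (dens_un b \<sigma>)"
      by (rule Bochner_Integration.integrable_bound[OF Dint dmeas]) (auto simp: dnn Dnn dle)
    define N where "N = norm_const b \<sigma>"
    have Npos: "N > 0"
    proof -
      have "c0 * measure lborel {0<..<1::real} \<le> (LINT x:UNIV|lborel. dens_un b \<sigma> x)"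
        using int_lower[OF dint dnn, of "{0<..<1}" c0 UNIV] dge Rge c0pos by auto
      then have "c0 \<le> N" by (simp add: N_def norm_const_def set_lebesgue_integral_def)
      then show ?thesis using c0pos by simp
    qed
    define H where "H = (\<lambda>y. LINT z:{..<y}|lborel. dens_un b \<sigma> z)"
    have Hint: "(LBINT z=-\<infinity>..ereal y. dens_un b \<sigma> z) = H y" for y
      by (simp add: interval_lebesgue_integral_le_eq H_def)
    have Hmono: "mono H"
      unfolding mono_def H_def by (auto intro!: int_mono_set[OF dint dnn])
    have Hmeas: "H \<in> borel_measurable lborel"
      using borel_measurable_mono[OF Hmono] by simp
    have Hle: "H y \<le> B0" for y
    proof -
      have "H y \<le> (LINT z|lborel. dens_un b \<sigma> z)"
        unfolding H_def by (rule int_le_total[OF dint dnn]) simp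
      also have "\<dots> \<le> B0" unfolding B0_def
        by (rule integral_mono[OF dint Dint dle])
      finally show ?thesis .
    qed
    have Hge: "c0 \<le> H y" if "y \<in> {y0..ybar}" for y
    proof -
      have "c0 * measure lborel {y-1<..<y} \<le> H y"
        unfolding H_def by (rule int_lower[OF dint dnn]) (use dge Rge c0pos that in auto)
      then show ?thesis by simp
    qed
    define G where "G = (\<lambda>y. exp (- Q y) * H y)"
    have ieq: "(\<lambda>y. (1 / ((\<sigma> y)\<^sup>2 * rho b \<sigma> y)) * (LBINT z=-\<infinity>..ereal y. rho b \<sigma> z)) = G"
    proof (rule ext)
      fix y
      have "(LBINT z=-\<infinity>..ereal y. rho b \<sigma> z) = H y / N"
        unfolding rho_def N_def[symmetric] by (simp add: Hint)
      then show "(1 / ((\<sigma> y)\<^sup>2 * rho b \<sigma> y)) * (LBINT z=-\<infinity>..ereal y. rho b \<sigma> z) = G y"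
        using Npos snz[of y] unfolding G_def rho_def N_def[symmetric] dens
        by (simp add: exp_minus field_simps)
    qed
    have xeq: "xi b \<sigma> y0 x = 2 * (LINT y:{y0..x}|lborel. G y)"
      unfolding xi_def ieq using x assms(8) by (simp add: interval_integral_Icc)
    have Gb: "m \<le> G y \<and> G y \<le> K" if "y \<in> {y0..x}" for y
    proof -
      have yr: "\<bar>y\<bar> \<le> R" "y \<in> {y0..ybar}" using that x Rge by auto
      have e: "exp(-L*R) \<le> exp(-Q y)" "exp(-Q y) \<le> exp(L*R)" using QR[OF yr(1)] by auto
      have H0: "0 \<le> H y" using Hge[OF yr(2)] c0pos by simp
      have B00: "0 \<le> B0" using Hle[of y] H0 by simp
      have "m \<le> exp(-Q y) * H y" unfolding m_def
        by (rule mult_mono) (use e Hge[OF yr(2)] c0pos in auto)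
      moreover have "exp(-Q y) * H y \<le> K" unfolding K_def
        by (rule mult_mono) (use e Hle H0 B00 in auto)
      ultimately show ?thesis by (simp add: G_def)
    qed
    have "continuous_on UNIV (\<lambda>y. exp (- Q y))" using Qc by (auto intro!: continuous_intros)
    from borel_measurable_continuous_onI[OF this]
    have em: "(\<lambda>y. exp (- Q y)) \<in> borel_measurable lborel" by simp
    have Gmeas: "G \<in> borel_measurable lborel"
      unfolding G_def using em Hmeas by (intro borel_measurable_times) auto
    have Gint: "set_integrable lborel {y0..x} G"
      unfolding set_integrable_def
    proof (rule integrableI_bounded_set_indicator[where B=K])
      show "AE xa in lborel. xa \<in> {y0..x} \<longrightarrow> norm (G xa) \<le> K"
      proof (rule AE_I2, intro impI)
        fix y assume "y \<in> {y0..x}"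
        then show "norm (G y) \<le> K" using Gb[of y] mpos by auto
      qed
    qed (use Gmeas in \<open>auto simp: emeasure_lborel_Icc_eq\<close>)
    have cint: "set_integrable lborel {y0..x} (\<lambda>_. c)" for c :: real
      unfolding set_integrable_def
      by (rule integrableI_bounded_set_indicator[where B="\<bar>c\<bar>"]) (auto simp: emeasure_lborel_Icc_eq)
    have xy: "y0 \<le> x" using x assms(8) by auto
    have ce: "(LINT y:{y0..x}|lborel. c) = (x - y0) * c" for c :: real
      using xy by (simp add: set_integral_const emeasure_lborel_Icc_eq)
    have "(LINT y:{y0..x}|lborel. m) \<le> (LINT y:{y0..x}|lborel. G y)"
      by (rule set_integral_mono[OF cint Gint]) (use Gb in blast)
    then have lo: "(x - y0) * m \<le> (LINT y:{y0..x}|lborel. G y)" by (simp only: ce)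
    have "(LINT y:{y0..x}|lborel. G y) \<le> (LINT y:{y0..x}|lborel. K)"
      by (rule set_integral_mono[OF Gint cint]) (use Gb in blast)
    then have hi: "(LINT y:{y0..x}|lborel. G y) \<le> (x - y0) * K" by (simp only: ce)
    have K0: "0 \<le> K" using Gb[of y0] xy mpos by auto
    have l2: "(y1 - y0) * m \<le> (x - y0) * m" using x mpos by (intro mult_right_mono) auto
    have h2: "(x - y0) * K \<le> (ybar - y0) * K" using x K0 by (intro mult_right_mono) auto
    have "M1 \<le> xi b \<sigma> y0 x"
    proof -
      have "2*m*(y1-y0) = 2*((y1-y0)*m)" by simp
      then show ?thesis using lo l2 unfolding xeq M1_def by linarith
    qed
    moreover have "xi b \<sigma> y0 x \<le> M2"
    proof -
      have "2*K*(ybar-y0) = 2*((ybar-y0)*K)" by simp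
      then show ?thesis using hi h2 unfolding xeq M2_def by linarith
    qed
    ultimately show ?thesis ..
  qed
  show ?thesis
    using main M1pos by (intro exI[of _ M1] exI[of _ M2]) (auto simp: M2_def)
qed

end
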